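(* Let $p$ be an odd prime, $h(t)\in\Lambda_p$ irreducible with $\mathrm{br}\,h=n\ge1$, and $\mathbb X=(\mathbb F(p,h(t)),* )$. For $m\ge1$ let $p_m(t)=\sum_{j=0}^{m-1}t^j$ and $H_m(t)=1-t^m$. Then: (1) $\mathbb X$ is trivial (i.e. $a*b=a$ for all $a,b$) if and only if $h(t)\doteq t-1$. (2) If $\mathbb X$ is non-trivial, then $*^m=*^0$ (i.e. $t_{\mathbb X}$ divides $m$) if and only if $h(t)$ divides $p_m(t)$ in $\Lambda_p$. (3) $H_m(\bar t)=0$ in $\mathbb F(p,h(t))$ if and only if $m$ is a multiple of $t_{\mathbb X}$. (4) If $\mathbb X$ is non-trivial then $t_{\mathbb X}\ge n+1$; moreover $t_{\mathbb X}=n+1$ if and only if $p_{n+1}(t)$ is irreducible in $\mathbb Z_p[t]$ and $h(t)\doteq p_{n+1}(t)$ in $\Lambda_p$, in which case $p_{n+1}(t)$ is irreducible in $\mathbb Z[t]$ and $n+1$ is prime.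
   Context: A quandle is a set with operation $*$ satisfying $a*a=a$, $(a*b)*c=(a*c)*(b*c)$ and bijectivity of $x\mapsto x*b$; $a*^0b=a$, $a*^nb=(a*^{n-1}b)*b$; for a finite quandle the type $t_{\mathbb X}$ is the least $m\ge1$ with $*^m=*^0$. $\Lambda_p=\mathbb Z_p[t,t^{-1}]$; breadth $\mathrm{br}\,f$ = highest minus lowest exponent of nonzero monomials; $f\doteq g$ means $f=at^kg$, $a\in\mathbb Z_p^*$, $k\in\mathbb Z$. $\mathbb F(p,h(t))=\Lambda_p/(h(t))$ (a field with $p^n$ elements), $\bar t$ the class of $t$, and $a*b=\bar ta+(1-\bar t)b$. *)

theory Defs
  imports "HOL-Computational_Algebra.Formal_Laurent_Series"
          "HOL-Computational_Algebra.Polynomial_FPS"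
          "Berlekamp_Zassenhaus.Finite_Field"
begin

text \<open>Laurent polynomials Lambda = R[t,t^-1], realised inside the ring of formal Laurent
  series 'a fls as those series with finitely many nonzero coefficients; t is fls_X.\<close>

definition lpoly :: "'a::comm_ring_1 fls set" where
  "lpoly = {f. finite {n. fls_nth f n \<noteq> 0}}"

definition lp_dvd :: "'a::comm_ring_1 fls \<Rightarrow> 'a fls \<Rightarrow> bool" where
  "lp_dvd g f \<longleftrightarrow> (\<exists>q\<in>lpoly. f = g * q)"

definition lp_unit :: "'a::comm_ring_1 fls \<Rightarrow> bool" where
  "lp_unit u \<longleftrightarrow> u \<in> lpoly \<and> (\<exists>v\<in>lpoly. u * v = 1)"

definition lp_irreducible :: "'a::comm_ring_1 fls \<Rightarrow> bool" where
  "lp_irreducible h \<longleftrightarrow> h \<in> lpoly \<and> h \<noteq> 0 \<and> \<not> lp_unit h \<and>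
     (\<forall>a\<in>lpoly. \<forall>b\<in>lpoly. h = a * b \<longrightarrow> lp_unit a \<or> lp_unit b)"

definition lp_breadth :: "'a::comm_ring_1 fls \<Rightarrow> int" where
  "lp_breadth f = Max {n. fls_nth f n \<noteq> 0} - Min {n. fls_nth f n \<noteq> 0}"

definition lp_assoc :: "'a::field fls \<Rightarrow> 'a fls \<Rightarrow> bool" where
  "lp_assoc f g \<longleftrightarrow> (\<exists>a. a \<noteq> 0 \<and> (\<exists>k::int. f = fls_const a * fls_X_intpow k * g))"

definition lp_of_poly :: "'a::comm_ring_1 poly \<Rightarrow> 'a fls" where
  "lp_of_poly p = fps_to_fls (fps_of_poly p)"

definition pm :: "nat \<Rightarrow> 'a::comm_ring_1 poly" where
  "pm m = (\<Sum>j<m. Polynomial.monom 1 j)"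

definition Hm :: "nat \<Rightarrow> 'a::comm_ring_1 fls" where
  "Hm m = 1 - fls_X ^ m"

text \<open>The Alexander quandle F(p,h) = Lambda/(h), with a*b = t a + (1-t) b.
  Elements of the quotient are represented by elements of Lambda; two representatives
  give the same element of the quotient iff they are congruent modulo h.\<close>
definition lp_cong :: "'a::comm_ring_1 fls \<Rightarrow> 'a fls \<Rightarrow> 'a fls \<Rightarrow> bool" where
  "lp_cong h a b \<longleftrightarrow> lp_dvd h (a - b)"

definition qop :: "'a::comm_ring_1 fls \<Rightarrow> 'a fls \<Rightarrow> 'a fls" where
  "qop a b = fls_X * a + (1 - fls_X) * b"

definition qpow :: "nat \<Rightarrow> 'a::comm_ring_1 fls \<Rightarrow> 'a fls \<Rightarrow> 'a fls" where
  "qpow m a b = ((\<lambda>x. qop x b) ^^ m) a"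

definition quandle_trivial :: "'a::comm_ring_1 fls \<Rightarrow> bool" where
  "quandle_trivial h \<longleftrightarrow> (\<forall>a\<in>lpoly. \<forall>b\<in>lpoly. lp_cong h (qop a b) a)"

definition qpow_id :: "'a::comm_ring_1 fls \<Rightarrow> nat \<Rightarrow> bool" where
  "qpow_id h m \<longleftrightarrow> (\<forall>a\<in>lpoly. \<forall>b\<in>lpoly. lp_cong h (qpow m a b) a)"

definition quandle_type :: "'a::comm_ring_1 fls \<Rightarrow> nat" where
  "quandle_type h = (LEAST m. m \<ge> 1 \<and> qpow_id h m)"

end

theory Submission
  imports Defs
begin

unbundle fps_syntax


lemma lp_nth: "lp_of_poly p $$ n = (if n < 0 then 0 else Polynomial.coeff p (nat n))"
  by (simp add: lp_of_poly_def)

lemma lp_mult: "lp_of_poly (p * q) = lp_of_poly p * (lp_of_poly q :: 'a::comm_ring_1 fls)"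
  by (simp add: lp_of_poly_def fps_of_poly_mult fls_times_fps_to_fls)

lemma lp_add: "lp_of_poly (p + q) = lp_of_poly p + (lp_of_poly q :: 'a::comm_ring_1 fls)"
  by (simp add: lp_of_poly_def fps_of_poly_add)

lemma lp_diff: "lp_of_poly (p - q) = lp_of_poly p - (lp_of_poly q :: 'a::comm_ring_1 fls)"
  by (simp add: lp_of_poly_def fps_of_poly_diff)

lemma lp_1 [simp]: "lp_of_poly 1 = (1 :: 'a::comm_ring_1 fls)"
  by (simp add: lp_of_poly_def)

lemma lp_0 [simp]: "lp_of_poly 0 = (0 :: 'a::comm_ring_1 fls)"
  by (simp add: lp_of_poly_def)

lemma lp_monom: "lp_of_poly (Polynomial.monom 1 m) = (fls_X ^ m :: 'a::comm_ring_1 fls)"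
  by (simp add: lp_of_poly_def fps_of_poly_monom' fps_to_fls_power)

lemma lp_X: "lp_of_poly [:0,1:] = (fls_X :: 'a::comm_ring_1 fls)"
  by (simp add: lp_of_poly_def)

lemma lp_smult: "lp_of_poly (Polynomial.smult c p) = fls_const c * (lp_of_poly p :: 'a::comm_ring_1 fls)"
proof -
  have "Polynomial.smult c p = [:c:] * p" by simp
  then show ?thesis by (simp only: lp_mult) (simp add: lp_of_poly_def fps_of_poly_const)
qed

lemma lp_inj: "lp_of_poly p = (lp_of_poly q :: 'a::comm_ring_1 fls) \<Longrightarrow> p = q"
  by (simp add: lp_of_poly_def fps_of_poly_eq_iff)

lemma Xpow_nth: "(fls_X ^ N * f) $$ n = (f :: 'a::comm_ring_1 fls) $$ (n - int N)"
  by (simp add: fls_X_power_times_conv_shift)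

lemma lp_support_finite: "finite {n. lp_of_poly (p::'a::comm_ring_1 poly) $$ n \<noteq> 0}"
proof -
  have "{n. lp_of_poly p $$ n \<noteq> 0} \<subseteq> int ` {..degree p}"
  proof
    fix n assume "n \<in> {n. lp_of_poly p $$ n \<noteq> 0}"
    then have "n \<ge> 0" "Polynomial.coeff p (nat n) \<noteq> 0" by (auto simp: lp_nth split: if_splits)
    then show "n \<in> int ` {..degree p}"
      using le_degree by (auto intro!: image_eqI[of _ _ "nat n"])
  qed
  then show ?thesis by (rule finite_subset) simp
qed

lemma lpoly_char: "(f :: 'a::comm_ring_1 fls) \<in> lpoly \<longleftrightarrow> (\<exists>N G. fls_X ^ N * f = lp_of_poly G)"
proof
  assume "f \<in> lpoly"
  then have fin: "finite {n. f $$ n \<noteq> 0}" by (simp add: lpoly_def)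
  define N where "N = nat (- fls_subdegree f)"
  define g where "g = fls_X ^ N * f"
  have gneg: "g $$ n = 0" if "n < 0" for n
  proof (cases "f = 0")
    case True then show ?thesis by (simp add: g_def)
  next
    case False
    have "n - int N < fls_subdegree f" using that by (simp add: N_def)
    then show ?thesis by (simp add: g_def Xpow_nth)
  qed
  have fin2: "finite {i::nat. g $$ int i \<noteq> 0}"
  proof -
    have "{i::nat. g $$ int i \<noteq> 0} \<subseteq> (\<lambda>n. nat (n + int N)) ` {n. f $$ n \<noteq> 0}"
    proof
      fix i assume "i \<in> {i::nat. g $$ int i \<noteq> 0}"
      then have "f $$ (int i - int N) \<noteq> 0" by (simp add: g_def Xpow_nth)
      then show "i \<in> (\<lambda>n. nat (n + int N)) ` {n. f $$ n \<noteq> 0}"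
        by (auto intro!: image_eqI[of _ _ "int i - int N"])
    qed
    then show ?thesis using fin by (rule finite_subset[OF _ finite_imageI])
  qed
  define G where "G = Abs_poly (\<lambda>i. g $$ int i)"
  have cG: "Polynomial.coeff G i = g $$ int i" for i
    unfolding G_def
    by (subst Abs_poly_inverse) (auto simp: eventually_cofinite fin2)
  have "g = lp_of_poly G"
    by (rule fls_eqI) (auto simp: lp_nth cG gneg)
  then show "\<exists>N G. fls_X ^ N * f = lp_of_poly G" unfolding g_def by blast
next
  assume "\<exists>N G. fls_X ^ N * f = lp_of_poly G"
  then obtain N G where e: "fls_X ^ N * f = lp_of_poly G" by blast
  have "{n. f $$ n \<noteq> 0} \<subseteq> (\<lambda>n. n - int N) ` {n. lp_of_poly G $$ n \<noteq> 0}"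
  proof
    fix n assume "n \<in> {n. f $$ n \<noteq> 0}"
    then have "lp_of_poly G $$ (n + int N) \<noteq> 0" by (simp flip: e add: Xpow_nth)
    then show "n \<in> (\<lambda>n. n - int N) ` {n. lp_of_poly G $$ n \<noteq> 0}"
      by (auto intro!: image_eqI[of _ _ "n + int N"])
  qed
  then show "f \<in> lpoly" unfolding lpoly_def
    using finite_subset[OF _ finite_imageI[OF lp_support_finite[of G]]] by blast
qed



lemma lpoly_lp [simp]: "lp_of_poly G \<in> lpoly"
  unfolding lpoly_char by (rule exI[of _ 0]) auto

lemma lpoly_mult: assumes "f \<in> lpoly" "g \<in> lpoly" shows "f * (g :: 'a::comm_ring_1 fls) \<in> lpoly"
proof -
  obtain N F where 1: "fls_X ^ N * f = lp_of_poly F" using assms(1) lpoly_char by blast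
  obtain M G where 2: "fls_X ^ M * g = lp_of_poly G" using assms(2) lpoly_char by blast
  have "fls_X ^ (N + M) * (f * g) = (fls_X ^ N * f) * (fls_X ^ M * g)"
    by (simp add: power_add mult_ac)
  also have "\<dots> = lp_of_poly (F * G)" by (simp add: 1 2 lp_mult)
  finally show ?thesis unfolding lpoly_char by blast
qed

lemma lpoly_add: assumes "f \<in> lpoly" "g \<in> lpoly" shows "f + (g :: 'a::comm_ring_1 fls) \<in> lpoly"
proof -
  obtain N F where 1: "fls_X ^ N * f = lp_of_poly F" using assms(1) lpoly_char by blast
  obtain M G where 2: "fls_X ^ M * g = lp_of_poly G" using assms(2) lpoly_char by blast
  have "fls_X ^ (N + M) * (f + g) = fls_X ^ M * (fls_X ^ N * f) + fls_X ^ N * (fls_X ^ M * g)"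
    by (simp add: power_add algebra_simps)
  also have "\<dots> = lp_of_poly (Polynomial.monom 1 M * F + Polynomial.monom 1 N * G)"
    by (simp add: 1 2 lp_mult lp_add lp_monom)
  finally show ?thesis unfolding lpoly_char by blast
qed

lemma lpoly_uminus: assumes "f \<in> lpoly" shows "- (f :: 'a::comm_ring_1 fls) \<in> lpoly"
proof -
  have "- f = lp_of_poly (-1) * f" by (simp add: lp_diff[of 0 1, simplified])
  then show ?thesis using lpoly_mult[OF lpoly_lp assms] by metis
qed

lemma lpoly_diff: assumes "f \<in> lpoly" "g \<in> lpoly" shows "f - (g :: 'a::comm_ring_1 fls) \<in> lpoly"
  using lpoly_add[OF assms(1) lpoly_uminus[OF assms(2)]] by simp

lemma lpoly_X_intpow [simp]: "(fls_X_intpow k :: 'a::comm_ring_1 fls) \<in> lpoly"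
proof -
  have "{n. (fls_X_intpow k :: 'a fls) $$ n \<noteq> 0} \<subseteq> {k}" by auto
  then show ?thesis unfolding lpoly_def by (auto intro: finite_subset)
qed

lemma lpoly_const [simp]: "(fls_const c :: 'a::comm_ring_1 fls) \<in> lpoly"
proof -
  have "{n. (fls_const c :: 'a fls) $$ n \<noteq> 0} \<subseteq> {0}" by auto
  then show ?thesis unfolding lpoly_def by (auto intro: finite_subset)
qed

lemma lpoly_X [simp]: "(fls_X :: 'a::comm_ring_1 fls) \<in> lpoly"
  using lpoly_lp[of "[:0,1:]"] by (simp add: lp_X)

lemma lpoly_1 [simp]: "(1 :: 'a::comm_ring_1 fls) \<in> lpoly"
  using lpoly_lp[of 1] by simp

lemma lpoly_0 [simp]: "(0 :: 'a::comm_ring_1 fls) \<in> lpoly"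
  using lpoly_lp[of 0] by simp

lemma coprime_X_cancel:
  fixes H :: "'a::field poly"
  assumes H0: "Polynomial.coeff H 0 \<noteq> 0" and d: "H dvd Polynomial.monom 1 M * G"
  shows "H dvd G"
  using d
proof (induction M arbitrary: G)
  case 0 then show ?case by simp
next
  case (Suc M)
  from Suc.prems obtain Q where Q: "Polynomial.monom 1 (Suc M) * G = H * Q" by (elim dvdE) blast
  have px: "prime_elem ([:0,1:] :: 'a poly)" by (rule prime_elem_linear_field_poly) simp
  have nH: "\<not> [:0,1:] dvd H" using H0 by (simp add: dvd_iff_poly_eq_0 poly_0_coeff_0)
  have ms: "Polynomial.monom 1 (Suc M) = [:0,1::'a:] * Polynomial.monom 1 M"
    by (simp add: x_as_monom mult_monom)
  have "[:0,1:] dvd H * Q" unfolding Q[symmetric] ms mult.assoc by (rule dvd_triv_left)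
  then have "[:0,1:] dvd Q" using px nH prime_elem_dvd_mult_iff by blast
  then obtain Q' where Q': "Q = [:0,1:] * Q'" by blast
  have "[:0,1::'a:] * (Polynomial.monom 1 M * G) = [:0,1:] * (H * Q')"
    using Q unfolding ms Q' by (simp add: mult_ac)
  then have "Polynomial.monom 1 M * G = H * Q'" by simp
  then show ?case using Suc.IH by simp
qed

lemma lp_dvd_iff:
  fixes H G :: "'a::field poly"
  assumes H0: "Polynomial.coeff H 0 \<noteq> 0" and e: "fls_X ^ N * f = lp_of_poly G"
  shows "lp_dvd (lp_of_poly H) f \<longleftrightarrow> H dvd G"
proof
  assume "H dvd G"
  then obtain Q where Q: "G = H * Q" by blast
  define q :: "'a fls" where "q = lp_of_poly Q / fls_X ^ N"
  have XN: "(fls_X ^ N :: 'a fls) \<noteq> 0" by simp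
  have qq: "fls_X ^ N * q = lp_of_poly Q" using XN by (simp add: q_def fls_X_power_times_conv_shift)
  then have "q \<in> lpoly" unfolding lpoly_char by blast
  moreover have "f = lp_of_poly H * q"
  proof -
    have "fls_X ^ N * f = fls_X ^ N * (lp_of_poly H * q)"
      by (simp add: e Q lp_mult flip: qq)
    then show ?thesis using XN by simp
  qed
  ultimately show "lp_dvd (lp_of_poly H) f" unfolding lp_dvd_def by blast
next
  assume "lp_dvd (lp_of_poly H) f"
  then obtain q where q: "q \<in> lpoly" "f = lp_of_poly H * q" unfolding lp_dvd_def by blast
  obtain M Q where QQ: "fls_X ^ M * q = lp_of_poly Q" using q(1) lpoly_char by blast
  have "lp_of_poly (Polynomial.monom 1 M * G) = fls_X ^ M * (fls_X ^ N * f)"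
    by (simp add: lp_mult lp_monom e)
  also have "\<dots> = fls_X ^ N * lp_of_poly H * (fls_X ^ M * q)" by (simp add: q(2) mult_ac)
  also have "\<dots> = lp_of_poly (Polynomial.monom 1 N * H * Q)" by (simp add: QQ lp_mult lp_monom)
  finally have "Polynomial.monom 1 M * G = H * (Polynomial.monom 1 N * Q)"
    by (auto dest: lp_inj simp: mult_ac)
  then have "H dvd Polynomial.monom 1 M * G" by simp
  then show "H dvd G" using coprime_X_cancel[OF H0] by blast
qed



lemma coeff_pm: "Polynomial.coeff (pm m :: 'a::comm_ring_1 poly) i = (if i < m then 1 else 0)"
  by (simp add: pm_def coeff_sum Polynomial.coeff_monom)

lemma pm_Suc: "pm (Suc m) = pm m + (Polynomial.monom 1 m :: 'a::comm_ring_1 poly)"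
  by (simp add: pm_def)

lemma pm_X: "(Polynomial.monom 1 1 - 1) * pm m = (Polynomial.monom 1 m - 1 :: 'a::comm_ring_1 poly)"
  by (induction m) (simp_all add: pm_Suc pm_def[of 0] algebra_simps mult_monom)

lemma pm_nz: "m \<ge> 1 \<Longrightarrow> (pm m :: 'a::field poly) \<noteq> 0"
  by (metis coeff_pm leD less_le_trans zero_less_one coeff_0 one_neq_zero)

lemma degree_pm: "m \<ge> 1 \<Longrightarrow> degree (pm m :: 'a::field poly) = m - 1"
proof (rule antisym)
  assume "m \<ge> 1"
  show "degree (pm m :: 'a poly) \<le> m - 1"
    by (rule degree_le) (auto simp: coeff_pm)
  show "m - 1 \<le> degree (pm m :: 'a poly)"
    by (rule le_degree) (use \<open>m \<ge> 1\<close> in \<open>simp add: coeff_pm\<close>)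
qed

lemma pm_add: "pm (a + b) = pm a + Polynomial.monom 1 a * (pm b :: 'a::comm_ring_1 poly)"
  by (induction b) (simp_all add: pm_Suc pm_def[of 0] algebra_simps mult_monom)

lemma pm_dvd_mult: "pm a dvd (pm (a * b) :: 'a::comm_ring_1 poly)"
proof (induction b)
  case 0 then show ?case by (simp add: pm_def)
next
  case (Suc b)
  have "a * Suc b = a * b + a" by simp
  then have "pm (a * Suc b) = pm (a * b) + Polynomial.monom 1 (a * b) * (pm a :: 'a poly)"
    using pm_add[of "a * b" a] by (simp only:)
  then show ?case using Suc by simp
qed

lemma pm_prime:
  assumes irr: "irreducible (pm m :: 'a::field poly)" and m2: "m \<ge> 2"
  shows "prime m"
  unfolding prime_nat_iff
proof (intro conjI allI impI)
  show "1 < m" using m2 by simp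
  fix d assume "d dvd m"
  then obtain e where e: "m = d * e" by blast
  show "d = 1 \<or> d = m"
  proof (rule ccontr)
    assume nd: "\<not> (d = 1 \<or> d = m)"
    have d0: "d \<noteq> 0" using e m2 by (cases d) auto
    have e0: "e \<noteq> 0" using e m2 by (cases e) auto
    have d2: "d \<ge> 2" using d0 nd by linarith
    have "e \<noteq> 1" using nd e by auto
    then have "e \<ge> 2" using e0 by linarith
    then have "d * 1 < d * e" using d0 by (intro mult_strict_left_mono) auto
    then have dm: "d < m" using e by simp
    have dv: "pm d dvd (pm m :: 'a poly)" using pm_dvd_mult[of d e] e by simp
    have "\<not> is_unit (pm d :: 'a poly)"
    proof -
      have "pm d \<noteq> (0::'a poly)" "degree (pm d :: 'a poly) = d - 1" using d2 pm_nz[of d] degree_pm[of d] by auto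
      then show ?thesis using d2 is_unit_iff_degree[of "pm d :: 'a poly"] by simp
    qed
    then have "pm m dvd (pm d :: 'a poly)" using irr dv unfolding irreducible_altdef by blast
    then have "degree (pm m :: 'a poly) \<le> degree (pm d :: 'a poly)"
      using pm_nz[of d] d2 by (intro dvd_imp_degree_le) auto
    moreover have "degree (pm m :: 'a poly) = m - 1" "degree (pm d :: 'a poly) = d - 1"
      using degree_pm[where 'a='a, of m] degree_pm[where 'a='a, of d] d2 dm by auto
    ultimately show False using d2 dm by simp
  qed
qed

lemma of_int_pm: "of_int_poly (pm m :: int poly) = (pm m :: 'a::comm_ring_1 poly)"
  by (rule poly_eqI) (simp add: coeff_map_poly coeff_pm)

lemma pm_int_irred:
  assumes irr: "irreducible (pm m :: 'a::field poly)"
  shows "irreducible (pm m :: int poly)"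
proof -
  have m1: "m \<ge> 1"
  proof (rule ccontr)
    assume "\<not> m \<ge> 1" then have "m = 0" by simp
    then show False using irr by (simp add: pm_def)
  qed
  have lcP: "lead_coeff (pm m :: int poly) = 1"
  proof -
    have "degree (pm m :: int poly) = m - 1"
    proof (rule antisym)
      show "degree (pm m :: int poly) \<le> m - 1" by (rule degree_le) (auto simp: coeff_pm)
      show "m - 1 \<le> degree (pm m :: int poly)" by (rule le_degree) (use m1 in \<open>simp add: coeff_pm\<close>)
    qed
    then show ?thesis using m1 by (simp add: coeff_pm)
  qed
  show ?thesis
  proof (rule irreducibleI)
    show "(pm m :: int poly) \<noteq> 0" using lcP by auto
    show "\<not> is_unit (pm m :: int poly)"
    proof
      assume "is_unit (pm m :: int poly)"
      then obtain Q where "pm m * Q = (1 :: int poly)" by (elim dvdE) simp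
      then have "of_int_poly (pm m * Q) = (1 :: 'a poly)" by simp
      then have "(pm m :: 'a poly) * of_int_poly Q = 1" by (simp add: of_int_poly_hom.hom_mult of_int_pm)
      then have "is_unit (pm m :: 'a poly)" by (metis dvd_triv_left)
      then show False using irr by (simp add: irreducible_def)
    qed
    fix A B :: "int poly" assume AB: "pm m = A * B"
    have "(pm m :: 'a poly) = of_int_poly (pm m :: int poly)" by (rule of_int_pm[symmetric])
    also have "\<dots> = of_int_poly A * of_int_poly B" by (simp only: AB of_int_poly_hom.hom_mult)
    finally have "(pm m :: 'a poly) = of_int_poly A * of_int_poly B" .
    then have u: "is_unit (of_int_poly A :: 'a poly) \<or> is_unit (of_int_poly B :: 'a poly)"
      using irr irreducibleD by blast
    have "lead_coeff A * lead_coeff B = 1" using lcP AB by (simp add: lead_coeff_mult)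
    then have lA: "lead_coeff A = 1 \<or> lead_coeff A = -1" and lB: "lead_coeff B = 1 \<or> lead_coeff B = -1"
      by (auto simp: zmult_eq_1_iff)
    have key: "is_unit C" if lC: "lead_coeff C = 1 \<or> lead_coeff C = -1"
        and uC: "is_unit (of_int_poly C :: 'a poly)" for C :: "int poly"
    proof -
      have nz: "of_int (lead_coeff C) \<noteq> (0::'a)" using lC by auto
      have "degree (of_int_poly C :: 'a poly) = degree C" by (rule map_poly_degree_eq) (use nz in simp)
      moreover have "degree (of_int_poly C :: 'a poly) = 0" using uC by (simp add: is_unit_field_poly)
      ultimately have "degree C = 0" by simp
      then have Cc: "C = [:lead_coeff C:]" by (simp add: degree_0_id)
      have "C * C = 1" using lC by (subst (1 2) Cc) auto
      then show ?thesis by (metis dvd_triv_left)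
    qed
    show "is_unit A \<or> is_unit B" using u key lA lB by blast
  qed
qed



lemma lpoly_shift1 [simp]: "(fls_shift j 1 :: 'a::comm_ring_1 fls) \<in> lpoly"
  using lpoly_X_intpow[of "-j"] by simp

lemma lpoly_nonneg:
  assumes "(f :: 'a::comm_ring_1 fls) \<in> lpoly" "\<And>n. n < 0 \<Longrightarrow> f $$ n = 0"
  shows "\<exists>G. f = lp_of_poly G"
proof -
  have fin: "finite {n. f $$ n \<noteq> 0}" using assms(1) by (simp add: lpoly_def)
  have fin2: "finite {i::nat. f $$ int i \<noteq> 0}"
  proof -
    have "{i::nat. f $$ int i \<noteq> 0} \<subseteq> nat ` {n. f $$ n \<noteq> 0}"
      by (auto intro!: image_eqI[of _ nat])
    then show ?thesis using fin by (rule finite_subset[OF _ finite_imageI])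
  qed
  define G where "G = Abs_poly (\<lambda>i. f $$ int i)"
  have cG: "Polynomial.coeff G i = f $$ int i" for i
    unfolding G_def
    by (subst Abs_poly_inverse) (auto simp: eventually_cofinite fin2)
  have "f = lp_of_poly G"
    by (rule fls_eqI) (auto simp: lp_nth cG assms(2))
  then show ?thesis by blast
qed

lemma normal_form:
  fixes h :: "'a::field fls"
  assumes hl: "h \<in> lpoly" and h0: "h \<noteq> 0"
  obtains k H where "h = fls_X_intpow k * lp_of_poly H" "Polynomial.coeff H 0 \<noteq> 0"
    "lp_breadth h = int (degree H)"
proof -
  define k where "k = fls_subdegree h"
  define g where "g = fls_shift k h"
  have gl: "g \<in> lpoly"
  proof -
    have "fls_X_intpow (-k) * h = fls_shift k h" using fls_X_intpow_times_conv_shift(1)[of "-k" h] by simp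
    then have "g = fls_X_intpow (-k) * h" by (simp add: g_def)
    then show ?thesis using lpoly_mult[OF lpoly_shift1 hl] by simp
  qed
  have "g $$ n = 0" if "n < 0" for n using that by (simp add: g_def k_def)
  then obtain H where gH: "g = lp_of_poly H" using lpoly_nonneg[OF gl] by blast
  have H0: "Polynomial.coeff H 0 \<noteq> 0"
  proof -
    have "Polynomial.coeff H 0 = g $$ 0" by (simp add: gH lp_nth)
    also have "\<dots> = h $$ k" by (simp add: g_def)
    finally show ?thesis using h0 by (simp add: k_def)
  qed
  have hg: "h = fls_X_intpow k * lp_of_poly H"
    by (rule fls_eqI) (simp add: fls_X_intpow_times_conv_shift flip: gH add: g_def)
  have hn: "h $$ n = (if n < k then 0 else Polynomial.coeff H (nat (n - k)))" for n
    by (simp add: hg fls_X_intpow_times_conv_shift lp_nth)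
  define S where "S = {n. h $$ n \<noteq> 0}"
  have finS: "finite S" using hl by (simp add: lpoly_def S_def)
  have Hnz: "H \<noteq> 0" using H0 by auto
  have "Max S = k + int (degree H)"
  proof (rule Max_eqI[OF finS])
    fix y assume "y \<in> S"
    then have "\<not> y < k" "Polynomial.coeff H (nat (y - k)) \<noteq> 0" by (auto simp: S_def hn split: if_splits)
    then have "nat (y - k) \<le> degree H" by (simp add: le_degree)
    then show "y \<le> k + int (degree H)" by linarith
  next
    show "k + int (degree H) \<in> S" using Hnz by (simp add: S_def hn)
  qed
  moreover have "Min S = k"
  proof (rule Min_eqI[OF finS])
    fix y assume "y \<in> S"
    then show "k \<le> y" by (auto simp: S_def hn split: if_splits)
  next
    show "k \<in> S" using H0 by (simp add: S_def hn)
  qed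
  ultimately have "lp_breadth h = int (degree H)" by (simp add: lp_breadth_def S_def)
  then show ?thesis using that hg H0 by blast
qed

lemma dvd_unit_mult:
  assumes uv: "u * v = 1" and ul: "u \<in> lpoly" and vl: "v \<in> lpoly"
  shows "lp_dvd (u * g) f \<longleftrightarrow> lp_dvd (g :: 'a::comm_ring_1 fls) f"
  unfolding lp_dvd_def
proof
  assume "\<exists>q\<in>lpoly. f = u * g * q"
  then obtain q where q: "q \<in> lpoly" "f = u * g * q" by blast
  have "u * q \<in> lpoly" using lpoly_mult[OF ul q(1)] .
  moreover have "f = g * (u * q)" using q(2) by (simp add: mult_ac)
  ultimately show "\<exists>q\<in>lpoly. f = g * q" by blast
next
  assume "\<exists>q\<in>lpoly. f = g * q"
  then obtain q where "q \<in> lpoly" "f = g * q" by blast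
  moreover have "g * q = u * g * (v * q)" by (simp add: mult_ac uv flip: mult.assoc)
  moreover have "v * q \<in> lpoly" using lpoly_mult[OF vl \<open>q \<in> lpoly\<close>] .
  ultimately show "\<exists>q\<in>lpoly. f = u * g * q" by metis
qed

lemma lp_unit_poly:
  fixes B :: "'a::field poly"
  assumes B0: "Polynomial.coeff B 0 \<noteq> 0" and u: "lp_unit (lp_of_poly B)"
  shows "is_unit B"
proof -
  from u obtain v where "v \<in> lpoly" "lp_of_poly B * v = 1" by (auto simp: lp_unit_def)
  then have "lp_dvd (lp_of_poly B) 1" unfolding lp_dvd_def by auto
  then have "B dvd 1" using lp_dvd_iff[OF B0, of 0 1 1] by simp
  then show ?thesis .
qed

lemma assoc_dvd:
  assumes "lp_assoc h g" "g \<in> lpoly"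
  shows "lp_dvd h (g :: 'a::field fls)"
proof -
  obtain a k where a: "a \<noteq> 0" and hk: "h = fls_const a * fls_X_intpow k * g"
    using assms(1) unfolding lp_assoc_def by blast
  have "h * (fls_const (1/a) * fls_X_intpow (-k)) = (fls_const a * fls_const (1/a)) * (fls_X_intpow k * fls_X_intpow (-k)) * g"
    by (simp add: hk mult_ac)
  also have "\<dots> = g"
  proof -
    have "fls_X_intpow k * fls_X_intpow (-k) = (1::'a fls)" using fls_X_intpow_times_fls_X_intpow[of k "-k"] by simp
    moreover have "fls_const a * fls_const (1/a) = 1" using a by simp
    ultimately show ?thesis by simp
  qed
  finally show ?thesis unfolding lp_dvd_def by (intro bexI[of _ "fls_const (1/a) * fls_X_intpow (-k)"]) (auto intro: lpoly_mult)
qed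

lemma poly_assoc_of_dvd:
  fixes H G :: "'a::field poly"
  assumes "H dvd G" "G \<noteq> 0" "degree G \<le> degree H"
  obtains c where "c \<noteq> 0" "G = Polynomial.smult c H"
proof -
  obtain Q where Q: "G = H * Q" using assms(1) by blast
  have "H \<noteq> 0" "Q \<noteq> 0" using Q assms(2) by auto
  then have "degree G = degree H + degree Q" by (simp add: Q degree_mult_eq)
  then have "degree Q = 0" using assms(3) by simp
  define c where "c = Polynomial.coeff Q 0"
  have Qc: "Q = [:c:]" using \<open>degree Q = 0\<close> unfolding c_def by (simp add: degree_0_id)
  have "c \<noteq> 0" using \<open>Q \<noteq> 0\<close> Qc by auto
  moreover have "G = Polynomial.smult c H" using Q Qc by simp
  ultimately show ?thesis by (rule that)
qed



theorem lemma2p1: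
  fixes h :: "'p::prime_card mod_ring fls" and n :: nat
  assumes odd_p: "odd CARD('p)"
    and irr: "lp_irreducible h"
    and br: "lp_breadth h = int n" and n_pos: "n \<ge> 1"
  shows
    "(quandle_trivial h \<longleftrightarrow> lp_assoc h (fls_X - 1))
   \<and> (\<not> quandle_trivial h \<longrightarrow> (\<forall>m\<ge>1.
          (qpow_id h m \<longleftrightarrow> lp_dvd h (lp_of_poly (pm m)))
        \<and> (quandle_type h dvd m \<longleftrightarrow> lp_dvd h (lp_of_poly (pm m)))))
   \<and> (\<forall>m\<ge>1. lp_dvd h (Hm m) \<longleftrightarrow> quandle_type h dvd m)
   \<and> (\<not> quandle_trivial h \<longrightarrow>
          quandle_type h \<ge> n + 1
        \<and> (quandle_type h = n + 1 \<longleftrightarrow>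
             irreducible (pm (n + 1) :: 'p mod_ring poly)
             \<and> lp_assoc h (lp_of_poly (pm (n + 1))))
        \<and> (quandle_type h = n + 1 \<longrightarrow>
             irreducible (pm (n + 1) :: int poly) \<and> prime (n + 1)))"
proof -
  have hl: "h \<in> lpoly" and h0: "h \<noteq> 0"
    and hirr: "\<forall>a\<in>lpoly. \<forall>b\<in>lpoly. h = a * b \<longrightarrow> lp_unit a \<or> lp_unit b"
    using irr unfolding lp_irreducible_def by auto
  obtain k H where hk: "h = fls_X_intpow k * lp_of_poly H" and H0: "Polynomial.coeff H 0 \<noteq> 0"
    and bH: "lp_breadth h = int (degree H)" using normal_form[OF hl h0] by blast
  have degH: "degree H = n" using bH br by simp
  have Hnz: "H \<noteq> 0" using H0 by auto
  let ?U = "fls_X_intpow k :: 'p mod_ring fls"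
  have UV: "?U * fls_X_intpow (-k) = 1" using fls_X_intpow_times_fls_X_intpow[of k "-k"] by simp
  have dvd_h: "lp_dvd h f \<longleftrightarrow> H dvd G" if "fls_X ^ N * f = lp_of_poly G" for f N G
    using dvd_unit_mult[OF UV lpoly_X_intpow lpoly_X_intpow] lp_dvd_iff[OF H0 that] hk by simp
  have dvd_h0: "lp_dvd h (lp_of_poly G) \<longleftrightarrow> H dvd G" for G
    using dvd_h[of 0 "lp_of_poly G" G] by simp
  have irrH: "irreducible H"
  proof (rule irreducibleI)
    show "H \<noteq> 0" by fact
    show "\<not> is_unit H" using Hnz degH n_pos is_unit_iff_degree by auto
    fix A B assume AB: "H = A * B"
    have A0: "Polynomial.coeff A 0 \<noteq> 0" and B0: "Polynomial.coeff B 0 \<noteq> 0"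
      using H0 AB by (auto simp: coeff_mult_0)
    have "h = (?U * lp_of_poly A) * lp_of_poly B" by (simp add: hk AB lp_mult mult.assoc)
    moreover have "?U * lp_of_poly A \<in> lpoly" by (intro lpoly_mult) auto
    ultimately have "lp_unit (?U * lp_of_poly A) \<or> lp_unit (lp_of_poly B)" using hirr by auto
    then show "is_unit A \<or> is_unit B"
    proof
      assume "lp_unit (?U * lp_of_poly A)"
      then obtain v where v: "v \<in> lpoly" "?U * lp_of_poly A * v = 1" by (auto simp: lp_unit_def)
      have "lp_of_poly A * (?U * v) = 1" using v(2) by (simp add: mult_ac)
      moreover have "?U * v \<in> lpoly" using lpoly_mult[OF lpoly_X_intpow v(1)] .
      ultimately have "lp_unit (lp_of_poly A)" unfolding lp_unit_def by auto
      then show ?thesis using lp_unit_poly[OF A0] by blast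
    next
      assume "lp_unit (lp_of_poly B)" then show ?thesis using lp_unit_poly[OF B0] by blast
    qed
  qed
  have primeH: "prime_elem H" using irrH by (rule irreducible_imp_prime_elem)

  define D where "D m \<longleftrightarrow> H dvd (Polynomial.monom 1 m - 1)" for m
  have lp_Xm: "fls_X ^ m - 1 = lp_of_poly (Polynomial.monom 1 m - 1 :: 'p mod_ring poly)" for m
    by (simp add: lp_diff lp_monom)
  have qpow_eq: "qpow m a b = fls_X ^ m * a + (1 - fls_X ^ m) * b" for m :: nat and a b :: "'p mod_ring fls"
  proof (induction m)
    case 0 then show ?case by (simp add: qpow_def)
  next
    case (Suc m)
    have "qpow (Suc m) a b = qop (qpow m a b) b" by (simp add: qpow_def)
    also have "\<dots> = fls_X ^ Suc m * a + (1 - fls_X ^ Suc m) * b"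
      unfolding Suc qop_def by (simp add: algebra_simps)
    finally show ?case .
  qed
  have qid: "qpow_id h m \<longleftrightarrow> D m" for m
  proof
    assume "qpow_id h m"
    then have "lp_cong h (qpow m 1 0) 1" unfolding qpow_id_def by auto
    then have "lp_dvd h (fls_X ^ m - 1)" by (simp add: lp_cong_def qpow_eq)
    then show "D m" unfolding D_def lp_Xm dvd_h0 .
  next
    assume "D m"
    then have "lp_dvd h (fls_X ^ m - 1)" unfolding D_def lp_Xm dvd_h0 .
    then obtain q where q: "q \<in> lpoly" "fls_X ^ m - 1 = h * q" unfolding lp_dvd_def by blast
    show "qpow_id h m" unfolding qpow_id_def lp_cong_def lp_dvd_def
    proof (intro ballI)
      fix a b :: "'p mod_ring fls" assume ab: "a \<in> lpoly" "b \<in> lpoly"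
      have "qpow m a b - a = (fls_X ^ m - 1) * (a - b)" by (simp add: qpow_eq algebra_simps)
      also have "\<dots> = h * (q * (a - b))" by (simp add: q(2) mult.assoc)
      finally have "qpow m a b - a = h * (q * (a - b))" .
      moreover have "q * (a - b) \<in> lpoly" using lpoly_mult[OF q(1) lpoly_diff[OF ab]] .
      ultimately show "\<exists>q\<in>lpoly. qpow m a b - a = h * q" by blast
    qed
  qed
  have triv: "quandle_trivial h \<longleftrightarrow> D 1"
    unfolding qid[symmetric] quandle_trivial_def qpow_id_def by (simp add: qpow_def)
  have HmD: "lp_dvd h (Hm m) \<longleftrightarrow> D m" for m
  proof -
    have "Hm m = lp_of_poly (1 - Polynomial.monom 1 m :: 'p mod_ring poly)"
      by (simp add: Hm_def lp_diff lp_monom)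
    then have "lp_dvd h (Hm m) \<longleftrightarrow> H dvd (1 - Polynomial.monom 1 m)" using dvd_h0 by simp
    also have "\<dots> \<longleftrightarrow> D m"
    proof -
      have "(1 - Polynomial.monom 1 m :: 'p mod_ring poly) = - (Polynomial.monom 1 m - 1)" by simp
      then show ?thesis unfolding D_def by (simp only: dvd_minus_iff)
    qed
    finally show ?thesis .
  qed

  have D_shift: "D (a + b) \<longleftrightarrow> D b" if Da: "D a" for a b
  proof -
    have e: "Polynomial.monom 1 (a + b) - 1 = Polynomial.monom 1 a * (Polynomial.monom 1 b - 1)
        + (Polynomial.monom 1 a - (1 :: 'p mod_ring poly))"
    proof -
      have gen: "x * (y - 1) + (x - 1) = x * y - (1::'p mod_ring poly)" for x y by (simp add: algebra_simps)
      have "Polynomial.monom 1 (a + b) = Polynomial.monom 1 a * (Polynomial.monom 1 b :: 'p mod_ring poly)"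
        by (simp add: mult_monom)
      then show ?thesis by (simp only: gen)
    qed
    have Ha: "H dvd Polynomial.monom 1 a - 1" using Da unfolding D_def .
    have "D (a + b) \<longleftrightarrow> H dvd Polynomial.monom 1 a * (Polynomial.monom 1 b - 1)"
      unfolding D_def e by (rule dvd_add_left_iff[OF Ha])
    also have "\<dots> \<longleftrightarrow> D b" unfolding D_def
    proof
      assume "H dvd Polynomial.monom 1 a * (Polynomial.monom 1 b - 1)"
      then show "H dvd Polynomial.monom 1 b - 1" by (rule coprime_X_cancel[OF H0])
    next
      assume "H dvd Polynomial.monom 1 b - 1"
      then show "H dvd Polynomial.monom 1 a * (Polynomial.monom 1 b - 1)" by (rule dvd_mult)
    qed
    finally show ?thesis .
  qed
  have D0: "D 0" by (simp add: D_def)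
  have ex: "\<exists>m. m \<ge> 1 \<and> D m"
  proof -
    define f where "f i = (Polynomial.monom 1 i :: 'p mod_ring poly) mod H" for i
    have dfi: "degree (f i) \<le> n" for i
    proof -
      have "f i = 0 \<or> degree (f i) < degree H" unfolding f_def by (rule degree_mod_less[OF Hnz])
      then show ?thesis using degH by auto
    qed
    have sub: "range f \<subseteq> {r. degree r \<le> n}" using dfi by auto
    have "{r :: 'p mod_ring poly. degree r \<le> n} \<subseteq> Poly ` {xs. set xs \<subseteq> UNIV \<and> length xs \<le> Suc n}"
    proof
      fix r :: "'p mod_ring poly" assume "r \<in> {r. degree r \<le> n}"
      then have "length (coeffs r) \<le> Suc n" by (cases "r = 0") (auto simp: length_coeffs_degree)
      then show "r \<in> Poly ` {xs. set xs \<subseteq> UNIV \<and> length xs \<le> Suc n}"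
        by (intro image_eqI[of _ _ "coeffs r"]) auto
    qed
    then have "finite {r :: 'p mod_ring poly. degree r \<le> n}"
      by (rule finite_subset) (intro finite_imageI finite_lists_length_le, simp)
    then have "finite (range f)" using sub finite_subset by blast
    then have "\<not> inj f" using finite_imageD by blast
    then obtain i j where ij: "i \<noteq> j" "f i = f j" unfolding inj_def by blast
    have "\<exists>i j. i < j \<and> f i = f j"
    proof (cases "i < j")
      case True then show ?thesis using ij by blast
    next
      case False then have "j < i" using ij by simp
      then show ?thesis using ij by metis
    qed
    then obtain i j where ij: "i < j" "f i = f j" by blast
    then have "H dvd Polynomial.monom 1 j - Polynomial.monom 1 i"
      using mod_eq_dvd_iff[of "Polynomial.monom 1 j" H "Polynomial.monom 1 i"] unfolding f_def by simp
    moreover have "Polynomial.monom 1 j - Polynomial.monom 1 i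
        = Polynomial.monom 1 i * (Polynomial.monom 1 (j - i) - (1 :: 'p mod_ring poly))"
    proof -
      have "Polynomial.monom 1 j = Polynomial.monom 1 i * (Polynomial.monom 1 (j - i) :: 'p mod_ring poly)"
        using ij(1) by (simp add: mult_monom)
      then show ?thesis by (simp add: right_diff_distrib)
    qed
    ultimately have "H dvd Polynomial.monom 1 i * (Polynomial.monom 1 (j - i) - 1)" by simp
    then have "D (j - i)" unfolding D_def by (rule coprime_X_cancel[OF H0])
    then show ?thesis using ij(1) by (intro exI[of _ "j - i"]) simp
  qed
  define t where "t = quandle_type h"
  have qfun: "qpow_id h = D" using qid by (intro ext) simp
  have t_def': "t = (LEAST m. m \<ge> 1 \<and> D m)" unfolding t_def quandle_type_def qfun ..
  have t1: "t \<ge> 1" and Dt: "D t" using LeastI_ex[OF ex] unfolding t_def'[symmetric] by auto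
  have tmin: "t \<le> m" if "1 \<le> m" "D m" for m unfolding t_def' by (rule Least_le) (use that in simp)
  have Dmult: "D (t * q + r) \<longleftrightarrow> D r" for q r
  proof (induction q)
    case 0 then show ?case by simp
  next
    case (Suc q)
    have "t * Suc q + r = t + (t * q + r)" by simp
    then show ?case using D_shift[OF Dt, of "t * q + r"] Suc by (simp only:)
  qed
  have Ddvd: "D m \<longleftrightarrow> t dvd m" for m
  proof
    assume Dm: "D m"
    have "D (t * (m div t) + m mod t)" using Dm by simp
    then have "D (m mod t)" using Dmult[of "m div t" "m mod t"] by simp
    moreover have "m mod t < t" using t1 by simp
    ultimately have "m mod t = 0" using tmin[of "m mod t"] by (cases "m mod t = 0") auto
    then show "t dvd m" by (simp add: dvd_eq_mod_eq_0)
  next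
    assume "t dvd m"
    then obtain q where "m = t * q" by auto
    then show "D m" using Dmult[of q 0] D0 by simp
  qed
  have assocG: "lp_assoc h (lp_of_poly G)" if dv: "H dvd G" and nz: "G \<noteq> 0" and dg: "degree G \<le> n" for G
  proof -
    have dg': "degree G \<le> degree H" using dg degH by simp
    obtain c where c: "c \<noteq> 0" "G = Polynomial.smult c H"
      using poly_assoc_of_dvd[OF dv nz dg'] by blast
    have "H = Polynomial.smult (1/c) G" using c by simp
    then have "h = fls_const (1/c) * ?U * lp_of_poly G" by (simp add: hk lp_smult mult_ac)
    moreover have "1/c \<noteq> 0" using c(1) by simp
    ultimately show ?thesis unfolding lp_assoc_def by blast
  qed
  have X1: "fls_X - 1 = lp_of_poly (Polynomial.monom 1 1 - 1 :: 'p mod_ring poly)"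
    using lp_Xm[of 1] by simp
  have X1nz: "(Polynomial.monom 1 1 - 1 :: 'p mod_ring poly) \<noteq> 0"
  proof
    assume "(Polynomial.monom 1 1 - 1 :: 'p mod_ring poly) = 0"
    then have "Polynomial.coeff (Polynomial.monom 1 1 - 1 :: 'p mod_ring poly) 1 = 0" by simp
    then show False by simp
  qed
  have X1deg: "degree (Polynomial.monom 1 1 - 1 :: 'p mod_ring poly) \<le> n"
  proof -
    have "degree (Polynomial.monom 1 1 - 1 :: 'p mod_ring poly) \<le> 1"
      by (rule degree_diff_le) (auto simp: degree_monom_eq)
    then show ?thesis using n_pos by simp
  qed

  have P1: "quandle_trivial h \<longleftrightarrow> lp_assoc h (fls_X - 1)"
  proof
    assume "quandle_trivial h"
    then have "D 1" using triv by simp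
    then show "lp_assoc h (fls_X - 1)" unfolding X1 D_def using assocG X1nz X1deg by blast
  next
    assume "lp_assoc h (fls_X - 1)"
    then have "lp_dvd h (fls_X - 1)" by (rule assoc_dvd) (simp add: X1)
    then show "quandle_trivial h" unfolding triv X1 dvd_h0 D_def .
  qed
  have DP: "D m \<longleftrightarrow> H dvd pm m" if nt: "\<not> quandle_trivial h" for m
  proof -
    have n1: "\<not> H dvd (Polynomial.monom 1 1 - 1)" using nt triv unfolding D_def by simp
    have "D m \<longleftrightarrow> H dvd (Polynomial.monom 1 1 - 1) * pm m" unfolding D_def pm_X ..
    also have "\<dots> \<longleftrightarrow> H dvd pm m" using primeH n1 prime_elem_dvd_mult_iff by blast
    finally show ?thesis .
  qed
  have P2: "\<not> quandle_trivial h \<longrightarrow> (\<forall>m\<ge>1.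
          (qpow_id h m \<longleftrightarrow> lp_dvd h (lp_of_poly (pm m)))
        \<and> (quandle_type h dvd m \<longleftrightarrow> lp_dvd h (lp_of_poly (pm m))))"
    using DP qid Ddvd dvd_h0 unfolding t_def by auto
  have P3: "\<forall>m\<ge>1. lp_dvd h (Hm m) \<longleftrightarrow> quandle_type h dvd m"
    using HmD Ddvd unfolding t_def by auto
  have P4: "\<not> quandle_trivial h \<longrightarrow>
          quandle_type h \<ge> n + 1
        \<and> (quandle_type h = n + 1 \<longleftrightarrow>
             irreducible (pm (n + 1) :: 'p mod_ring poly)
             \<and> lp_assoc h (lp_of_poly (pm (n + 1))))
        \<and> (quandle_type h = n + 1 \<longrightarrow>
             irreducible (pm (n + 1) :: int poly) \<and> prime (n + 1))"
  proof
    assume nt: "\<not> quandle_trivial h"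
    have tge: "t \<ge> n + 1"
    proof -
      have "H dvd pm t" using DP[OF nt] Dt by simp
      then have "degree H \<le> degree (pm t :: 'p mod_ring poly)"
        using pm_nz[OF t1] by (intro dvd_imp_degree_le) auto
      then show ?thesis using degH degree_pm[where 'a="'p mod_ring", OF t1] t1 by simp
    qed
    have fwd: "irreducible (pm (n + 1) :: 'p mod_ring poly) \<and> lp_assoc h (lp_of_poly (pm (n + 1)))"
      if tn: "t = n + 1"
    proof
      have dv: "H dvd pm (n + 1)" using DP[OF nt] Dt tn by simp
      have nz: "(pm (n + 1) :: 'p mod_ring poly) \<noteq> 0" by (rule pm_nz) simp
      have dg: "degree (pm (n + 1) :: 'p mod_ring poly) = n" using degree_pm[where 'a="'p mod_ring", of "n+1"] by simp
      show "lp_assoc h (lp_of_poly (pm (n + 1)))" using assocG[OF dv nz] dg by simp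
      have dg': "degree (pm (n + 1) :: 'p mod_ring poly) \<le> degree H" using dg degH by simp
      obtain c where c: "c \<noteq> 0" "(pm (n + 1) :: 'p mod_ring poly) = Polynomial.smult c H"
        using poly_assoc_of_dvd[OF dv nz dg'] by blast
      have pe: "(pm (n + 1) :: 'p mod_ring poly) = H * [:c:]" using c by simp
      have u: "is_unit [:c:]" using c(1) by (rule is_unit_triv)
      have "irreducible (H * [:c:])" by (subst irreducible_mult_unit_right[OF u]) (rule irrH)
      then show "irreducible (pm (n + 1) :: 'p mod_ring poly)" unfolding pe .
    qed
    have bwd: "t = n + 1" if "lp_assoc h (lp_of_poly (pm (n + 1)))"
    proof -
      have "lp_dvd h (lp_of_poly (pm (n + 1)))" using that by (rule assoc_dvd) simp
      then have "H dvd pm (n + 1)" using dvd_h0 by simp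
      then have "t dvd n + 1" using DP[OF nt] Ddvd by simp
      then have "t \<le> n + 1" by (rule dvd_imp_le) simp
      then show ?thesis using tge by simp
    qed
    show "quandle_type h \<ge> n + 1
        \<and> (quandle_type h = n + 1 \<longleftrightarrow>
             irreducible (pm (n + 1) :: 'p mod_ring poly)
             \<and> lp_assoc h (lp_of_poly (pm (n + 1))))
        \<and> (quandle_type h = n + 1 \<longrightarrow>
             irreducible (pm (n + 1) :: int poly) \<and> prime (n + 1))"
      unfolding t_def[symmetric]
    proof (intro conjI impI iffI)
      show "t \<ge> n + 1" by (rule tge)
    next
      assume "t = n + 1" then show "irreducible (pm (n + 1) :: 'p mod_ring poly)" using fwd by blast
    next
      assume "t = n + 1" then show "lp_assoc h (lp_of_poly (pm (n + 1)))" using fwd by blast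
    next
      assume "irreducible (pm (n + 1) :: 'p mod_ring poly) \<and> lp_assoc h (lp_of_poly (pm (n + 1)))"
      then show "t = n + 1" using bwd by blast
    next
      assume "t = n + 1"
      then have "irreducible (pm (n + 1) :: 'p mod_ring poly)" using fwd by blast
      then show "irreducible (pm (n + 1) :: int poly)" by (rule pm_int_irred)
    next
      assume "t = n + 1"
      then have "irreducible (pm (n + 1) :: 'p mod_ring poly)" using fwd by blast
      then show "prime (n + 1)" by (rule pm_prime) (use n_pos in simp)
    qed
  qed
  show ?thesis using P1 P2 P3 P4 by blast
qed



end
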